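(* Let $G=(V,E)$ be a finite graph with special vertex $i$, symmetric edge weights $w_E$ (with $w_E(u,v)=0$ for $uv\notin E$) and vertex weights $w_V$ (nonnegative, not identically zero), such that $G$ and $G-i$ are each positively connected. Let $f_i$ be a solution of $$\min_{\|g\|_w=1,\ g(i)=0}\ \sum_{jk\in E} w_E(j,k)\,(g(k)-g(j))^2,$$ positive on $V\setminus\{i\}$. Fix vertices $j,k$ with $jk\in E$ such that $G-j$ is not connected and $i$ and $k$ lie in different components of $G-j$, and suppose $w_V(k)>0$. Then $j$ is the unique vertex $z\in N(k)$ satisfying $f_i(z)=\min_{z'\in N(k)}f_i(z')$.
   Context: $\|g\|_w=\sqrt{\sum_{u\in V}w_V(u)g(u)^2}$; each edge is counted once. A weighted graph is positively connected if any two vertices are joined by a path of positive-weight edges; $G-x$ is $G$ with vertex $x$ deleted. Edges of weight zero are regarded as deleted, so neighborhoods $N(u)$, the edge $jk$, and connectivity refer to positive-weight edges. *)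

theory Defs
  imports Main "HOL-Analysis.Analysis"
begin

text \<open>A finite weighted graph: vertex set V, symmetric nonnegative edge weights wE
  (zero off V, no loops), nonnegative vertex weights wV. Edges of weight zero are deleted.\<close>

definition weighted_graph :: "'a set \<Rightarrow> ('a \<Rightarrow> 'a \<Rightarrow> real) \<Rightarrow> ('a \<Rightarrow> real) \<Rightarrow> bool" where
  "weighted_graph V wE wV \<longleftrightarrow> finite V
     \<and> (\<forall>u v. wE u v = wE v u) \<and> (\<forall>u v. wE u v \<ge> 0)
     \<and> (\<forall>u v. (u \<notin> V \<or> v \<notin> V) \<longrightarrow> wE u v = 0) \<and> (\<forall>u. wE u u = 0)
     \<and> (\<forall>u. wV u \<ge> 0) \<and> (\<exists>u\<in>V. wV u \<noteq> 0)"

definition pos_edges :: "'a set \<Rightarrow> ('a \<Rightarrow> 'a \<Rightarrow> real) \<Rightarrow> ('a \<times> 'a) set" where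
  "pos_edges S wE = {(u, v). u \<in> S \<and> v \<in> S \<and> wE u v > 0}"

definition same_component :: "'a set \<Rightarrow> ('a \<Rightarrow> 'a \<Rightarrow> real) \<Rightarrow> 'a \<Rightarrow> 'a \<Rightarrow> bool" where
  "same_component S wE u v \<longleftrightarrow> u \<in> S \<and> v \<in> S \<and> (u, v) \<in> (pos_edges S wE)\<^sup>*"

definition pos_connected :: "'a set \<Rightarrow> ('a \<Rightarrow> 'a \<Rightarrow> real) \<Rightarrow> bool" where
  "pos_connected S wE \<longleftrightarrow> (\<forall>u\<in>S. \<forall>v\<in>S. same_component S wE u v)"

definition nbhd :: "('a \<Rightarrow> 'a \<Rightarrow> real) \<Rightarrow> 'a set \<Rightarrow> 'a \<Rightarrow> 'a set" where
  "nbhd wE V u = {v \<in> V. wE u v > 0}"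

text \<open>Weighted norm and Dirichlet energy (each edge counted once).\<close>
definition wnorm :: "'a set \<Rightarrow> ('a \<Rightarrow> real) \<Rightarrow> ('a \<Rightarrow> real) \<Rightarrow> real" where
  "wnorm V wV g = sqrt (\<Sum>u\<in>V. wV u * (g u)\<^sup>2)"

definition energy :: "'a set \<Rightarrow> ('a \<Rightarrow> 'a \<Rightarrow> real) \<Rightarrow> ('a \<Rightarrow> real) \<Rightarrow> real" where
  "energy V wE g = (1/2) * (\<Sum>u\<in>V. \<Sum>v\<in>V. wE u v * (g v - g u)\<^sup>2)"

definition is_minimizer :: "'a set \<Rightarrow> ('a \<Rightarrow> 'a \<Rightarrow> real) \<Rightarrow> ('a \<Rightarrow> real) \<Rightarrow> 'a \<Rightarrow> ('a \<Rightarrow> real) \<Rightarrow> bool" where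
  "is_minimizer V wE wV i f \<longleftrightarrow> wnorm V wV f = 1 \<and> f i = 0
     \<and> (\<forall>g. wnorm V wV g = 1 \<and> g i = 0 \<longrightarrow> energy V wE f \<le> energy V wE g)"

end

theory Submission
  imports Defs
begin

lemma energy_expand:
  "energy V wE (\<lambda>u. f u + t * h u) = energy V wE f
     + 2 * t * ((1/2) * (\<Sum>u\<in>V. \<Sum>v\<in>V. wE u v * ((f v - f u) * (h v - h u))))
     + t^2 * energy V wE h"
proof -
  have pt: "\<And>u v. wE u v * ((f v + t * h v) - (f u + t * h u))^2
     = wE u v * (f v - f u)^2 + 2 * t * (wE u v * ((f v - f u) * (h v - h u))) + t^2 * (wE u v * (h v - h u)^2)"
    by (simp add: power2_eq_square algebra_simps)
  have "(\<Sum>u\<in>V. \<Sum>v\<in>V. wE u v * ((f v + t * h v) - (f u + t * h u))^2)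
     = (\<Sum>u\<in>V. \<Sum>v\<in>V. wE u v * (f v - f u)^2) + 2 * t * (\<Sum>u\<in>V. \<Sum>v\<in>V. wE u v * ((f v - f u) * (h v - h u)))
      + t^2 * (\<Sum>u\<in>V. \<Sum>v\<in>V. wE u v * (h v - h u)^2)"
    by (simp only: pt sum.distrib sum_distrib_left)
  then show ?thesis unfolding energy_def by (simp add: algebra_simps)
qed

lemma norm_expand:
  fixes wV f h :: "'a \<Rightarrow> real"
  shows "(\<Sum>u\<in>V. wV u * (f u + t * h u)^2) = (\<Sum>u\<in>V. wV u * (f u)^2)
     + 2 * t * (\<Sum>u\<in>V. wV u * (f u * h u)) + t^2 * (\<Sum>u\<in>V. wV u * (h u)^2)"
proof -
  have pt: "\<And>u. wV u * (f u + t * h u)^2 = wV u * (f u)^2 + 2 * t * (wV u * (f u * h u)) + t^2 * (wV u * (h u)^2)"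
    by (simp add: power2_eq_square algebra_simps)
  show ?thesis by (simp only: pt sum.distrib sum_distrib_left)
qed

lemma energy_scale: "energy V wE (\<lambda>u. c * g u) = c^2 * energy V wE g"
proof -
  have pt: "\<And>u v. wE u v * (c * g v - c * g u)^2 = c^2 * (wE u v * (g v - g u)^2)"
    by (simp add: power2_eq_square algebra_simps)
  show ?thesis unfolding energy_def by (simp add: pt sum_distrib_left algebra_simps)
qed

lemma quad_lemma:
  fixes p q :: real
  assumes "\<forall>t. 2 * t * p + t^2 * q \<ge> 0"
  shows "p = 0"
proof (rule ccontr)
  assume p: "p \<noteq> 0"
  define s where "s = \<bar>q\<bar> + 1"
  have s: "s > 0" "\<bar>q\<bar> \<le> s" unfolding s_def by auto
  define t where "t = - p / s"
  have "2 * t * p + t^2 * q = - 2 * p^2 / s + p^2 * q / s^2"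
    unfolding t_def by (simp add: power2_eq_square field_simps)
  also have "p^2 * q / s^2 \<le> p^2 * s / s^2"
    using s by (intro divide_right_mono mult_left_mono) auto
  also have "p^2 * s / s^2 = p^2 / s" using s by (simp add: power2_eq_square)
  finally have "2 * t * p + t^2 * q \<le> -(p^2 / s)" by simp
  moreover have "p^2 / s > 0" using p s by simp
  ultimately show False using assms by smt
qed


lemma energy_nonneg:
  assumes "\<forall>u v. wE u v \<ge> 0"
  shows "energy V wE g \<ge> 0"
  unfolding energy_def using assms by (intro mult_nonneg_nonneg sum_nonneg) auto

lemma min_ineq:
  fixes f g :: "'a \<Rightarrow> real"
  assumes fmin: "is_minimizer V wE wV i f" and gi: "g i = 0"
    and wV: "\<forall>u. wV u \<ge> 0" and wE: "\<forall>u v. wE u v \<ge> 0"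
  shows "energy V wE f * (\<Sum>u\<in>V. wV u * (g u)^2) \<le> energy V wE g"
proof -
  define N where "N = (\<Sum>u\<in>V. wV u * (g u)^2)"
  have N0: "N \<ge> 0" unfolding N_def using wV by (intro sum_nonneg) auto
  show ?thesis
  proof (cases "N = 0")
    case True
    then show ?thesis using energy_nonneg[OF wE] by (simp add: N_def)
  next
    case False
    with N0 have Np: "N > 0" by simp
    define c where "c = 1 / sqrt N"
    have c2: "c^2 = 1 / N" using Np by (simp add: c_def power_divide)
    have "(\<Sum>u\<in>V. wV u * (c * g u)^2) = c^2 * N"
      unfolding N_def by (simp add: sum_distrib_left power_mult_distrib algebra_simps)
    also have "\<dots> = 1" using c2 Np by simp
    finally have "wnorm V wV (\<lambda>u. c * g u) = 1" unfolding wnorm_def by simp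
    moreover have "(\<lambda>u. c * g u) i = 0" using gi by simp
    ultimately have "energy V wE f \<le> energy V wE (\<lambda>u. c * g u)"
      using fmin unfolding is_minimizer_def by blast
    also have "\<dots> = energy V wE g / N" using c2 by (simp add: energy_scale)
    finally show ?thesis using Np by (simp add: N_def[symmetric] pos_le_divide_eq)
  qed
qed

lemma EL:
  fixes f :: "'a \<Rightarrow> real"
  assumes fmin: "is_minimizer V wE wV i f"
    and wV: "\<forall>u. wV u \<ge> 0" and wE: "\<forall>u v. wE u v \<ge> 0"
    and sym: "\<forall>u v. wE u v = wE v u" and fin: "finite V"
    and xV: "x \<in> V" and xi: "x \<noteq> i"
  shows "(\<Sum>v\<in>V. wE x v * (f x - f v)) = energy V wE f * (wV x * f x)"
proof -
  define h :: "'a \<Rightarrow> real" where "h = (\<lambda>u. if u = x then 1 else 0)"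
  define lam where "lam = energy V wE f"
  define B where "B = (1/2) * (\<Sum>u\<in>V. \<Sum>v\<in>V. wE u v * ((f v - f u) * (h v - h u)))"
  define A where "A = (\<Sum>u\<in>V. wV u * (f u * h u))"
  define Nh where "Nh = (\<Sum>u\<in>V. wV u * (h u)^2)"
  have fN: "(\<Sum>u\<in>V. wV u * (f u)^2) = 1"
  proof -
    have "sqrt (\<Sum>u\<in>V. wV u * (f u)^2) = 1" using fmin unfolding is_minimizer_def wnorm_def by simp
    then show ?thesis by simp
  qed
  have fi: "f i = 0" using fmin unfolding is_minimizer_def by simp
  have "\<forall>t. 2 * t * (B - lam * A) + t^2 * (energy V wE h - lam * Nh) \<ge> 0"
  proof
    fix t :: real
    have "lam * (\<Sum>u\<in>V. wV u * (f u + t * h u)^2) \<le> energy V wE (\<lambda>u. f u + t * h u)"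
      unfolding lam_def using min_ineq[OF fmin _ wV wE, of "\<lambda>u. f u + t * h u"] fi xi
      by (simp add: h_def)
    then have "lam * (1 + 2 * t * A + t^2 * Nh) \<le> lam + 2 * t * B + t^2 * energy V wE h"
      unfolding norm_expand energy_expand fN A_def Nh_def B_def lam_def .
    then show "2 * t * (B - lam * A) + t^2 * (energy V wE h - lam * Nh) \<ge> 0"
      by (simp add: algebra_simps)
  qed
  from quad_lemma[OF this] have BA: "B = lam * A" by simp
  have A: "A = wV x * f x" unfolding A_def h_def using fin xV by (simp add: if_distrib cong: if_cong)
  have S1: "(\<Sum>u\<in>V. \<Sum>v\<in>V. wE u v * (f v - f u) * h v) = (\<Sum>u\<in>V. wE x u * (f x - f u))"
    unfolding h_def using fin xV sym by (simp add: if_distrib cong: if_cong)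
  have S2: "(\<Sum>u\<in>V. \<Sum>v\<in>V. wE u v * (f v - f u) * h u) = - (\<Sum>v\<in>V. wE x v * (f x - f v))"
  proof -
    have "(\<Sum>u\<in>V. \<Sum>v\<in>V. wE u v * (f v - f u) * h u) = (\<Sum>u\<in>V. h u * (\<Sum>v\<in>V. wE u v * (f v - f u)))"
      by (simp add: sum_distrib_left algebra_simps)
    also have "\<dots> = (\<Sum>v\<in>V. wE x v * (f v - f x))" unfolding h_def using fin xV by (simp add: if_distrib[of "\<lambda>c. c * _"] cong: if_cong)
    also have "\<dots> = - (\<Sum>v\<in>V. wE x v * (f x - f v))" by (simp add: sum_negf[symmetric] algebra_simps)
    finally show ?thesis .
  qed
  have "B = (1/2) * ((\<Sum>u\<in>V. \<Sum>v\<in>V. wE u v * (f v - f u) * h v) - (\<Sum>u\<in>V. \<Sum>v\<in>V. wE u v * (f v - f u) * h u))"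
    unfolding B_def by (simp add: sum_subtractf[symmetric] algebra_simps)
  also have "\<dots> = (\<Sum>v\<in>V. wE x v * (f x - f v))" unfolding S1 S2 by simp
  finally show ?thesis using BA A lam_def by simp
qed


theorem corollary11:
  fixes V :: "'a set" and wE :: "'a \<Rightarrow> 'a \<Rightarrow> real" and wV :: "'a \<Rightarrow> real"
    and i j k :: 'a and f :: "'a \<Rightarrow> real"
  assumes G: "weighted_graph V wE wV"
    and iV: "i \<in> V"
    and conn: "pos_connected V wE"
    and conn_i: "pos_connected (V - {i}) wE"
    and fmin: "is_minimizer V wE wV i f"
    and fpos: "\<forall>u\<in>V - {i}. f u > 0"
    and jV: "j \<in> V" and kV: "k \<in> V"
    and jk: "wE j k > 0"
    and disc: "\<not> pos_connected (V - {j}) wE"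
    and sep: "i \<in> V - {j}" "k \<in> V - {j}" "\<not> same_component (V - {j}) wE i k"
    and wk: "wV k > 0"
  shows "{z \<in> nbhd wE V k. f z = Min (f ` nbhd wE V k)} = {j}"
proof -
  have fin: "finite V" and sym: "\<forall>u v. wE u v = wE v u" and wE0: "\<forall>u v. wE u v \<ge> 0"
    and wV0: "\<forall>u. wV u \<ge> 0"
    using G unfolding weighted_graph_def by blast+
  define lam where "lam = energy V wE f"
  have fi: "f i = 0" using fmin unfolding is_minimizer_def by simp
  have fN: "(\<Sum>u\<in>V. wV u * (f u)^2) = 1"
  proof -
    have "sqrt (\<Sum>u\<in>V. wV u * (f u)^2) = 1" using fmin unfolding is_minimizer_def wnorm_def by simp
    then show ?thesis by simp
  qed
  have ELx: "\<And>x. x \<in> V \<Longrightarrow> x \<noteq> i \<Longrightarrow> (\<Sum>v\<in>V. wE x v * (f x - f v)) = lam * (wV x * f x)"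
    unfolding lam_def using EL[OF fmin wV0 wE0 sym fin] by blast
  have lampos: "lam > 0"
  proof (rule ccontr)
    assume "\<not> lam > 0"
    moreover have "lam \<ge> 0" unfolding lam_def using energy_nonneg[OF wE0] .
    ultimately have "lam = 0" by simp
    then have "(\<Sum>u\<in>V. \<Sum>v\<in>V. wE u v * (f v - f u)^2) = 0" unfolding lam_def energy_def by simp
    moreover have nn: "\<forall>u\<in>V. (\<Sum>v\<in>V. wE u v * (f v - f u)^2) \<ge> 0"
    proof
      fix u show "(\<Sum>v\<in>V. wE u v * (f v - f u)^2) \<ge> 0" using wE0 by (intro sum_nonneg) simp
    qed
    ultimately have "\<forall>u\<in>V. (\<Sum>v\<in>V. wE u v * (f v - f u)^2) = 0"
      using sum_nonneg_eq_0_iff[OF fin, of "\<lambda>u. (\<Sum>v\<in>V. wE u v * (f v - f u)^2)"] by simp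
    then have "\<forall>u\<in>V. \<forall>v\<in>V. wE u v * (f v - f u)^2 = 0"
    proof (intro ballI)
      fix u v assume h: "\<forall>u\<in>V. (\<Sum>v\<in>V. wE u v * (f v - f u)^2) = 0" and u: "u \<in> V" and v: "v \<in> V"
      have "\<forall>v\<in>V. wE u v * (f v - f u)^2 \<ge> 0" using wE0 by simp
      then show "wE u v * (f v - f u)^2 = 0" using h u v sum_nonneg_eq_0_iff[OF fin, of "\<lambda>v. wE u v * (f v - f u)^2"] by simp
    qed
    then have edge: "\<And>u v. (u, v) \<in> pos_edges V wE \<Longrightarrow> f v = f u"
    proof -
      fix u v assume h: "\<forall>u\<in>V. \<forall>v\<in>V. wE u v * (f v - f u)^2 = 0" and e: "(u, v) \<in> pos_edges V wE"
      then have "u \<in> V" "v \<in> V" "wE u v > 0" unfolding pos_edges_def by auto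
      moreover have "wE u v * (f v - f u)^2 = 0" using h \<open>u \<in> V\<close> \<open>v \<in> V\<close> by blast
      ultimately have "(f v - f u)^2 = 0" by simp
      then show "f v = f u" by simp
    qed
    have "\<And>u. (i, u) \<in> (pos_edges V wE)\<^sup>* \<Longrightarrow> f u = 0"
    proof -
      fix u assume "(i, u) \<in> (pos_edges V wE)\<^sup>*"
      then show "f u = 0"
      proof (induction rule: rtrancl_induct)
        case base show ?case by (rule fi)
      next
        case (step y z) then show ?case using edge[of y z] by simp
      qed
    qed
    have "\<forall>u\<in>V. f u = 0"
    proof
      fix u assume "u \<in> V"
      then have "same_component V wE i u" using conn iV unfolding pos_connected_def by blast
      then show "f u = 0" using \<open>\<And>u. (i, u) \<in> (pos_edges V wE)\<^sup>* \<Longrightarrow> f u = 0\<close> unfolding same_component_def by blast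
    qed
    then have "(\<Sum>u\<in>V. wV u * (f u)^2) = 0" by simp
    then show False using fN by simp
  qed
  define R where "R = (pos_edges (V - {j}) wE)\<^sup>*"
  define C where "C = {u \<in> V - {j}. (u, k) \<in> R}"
  have iC: "i \<notin> C" using sep unfolding C_def R_def same_component_def by auto
  have kC: "k \<in> C" using sep unfolding C_def R_def by auto
  have finC: "finite C" unfolding C_def using fin by auto
  have Cnb: "\<And>x v. x \<in> C \<Longrightarrow> v \<in> V \<Longrightarrow> wE x v > 0 \<Longrightarrow> v \<noteq> j \<Longrightarrow> v \<in> C"
  proof -
    fix x v assume x: "x \<in> C" and v: "v \<in> V" "wE x v > 0" "v \<noteq> j"
    have "(v, x) \<in> pos_edges (V - {j}) wE" using x v sym[rule_format, of v x] unfolding C_def pos_edges_def by auto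
    then have "(v, k) \<in> R" using x unfolding C_def R_def by auto
    then show "v \<in> C" using v unfolding C_def by auto
  qed
  have bigger: "\<forall>u\<in>C. f j < f u"
  proof (rule ccontr)
    assume "\<not> (\<forall>u\<in>C. f j < f u)"
    then obtain u0 where u0: "u0 \<in> C" "f u0 \<le> f j" by (auto simp: not_less)
    define m where "m = Min (f ` C)"
    have mle: "\<And>u. u \<in> C \<Longrightarrow> m \<le> f u" unfolding m_def using finC by auto
    have "m \<in> f ` C" unfolding m_def using finC kC by (intro Min_in) auto
    then obtain x0 where x0: "x0 \<in> C" "f x0 = m" by auto
    have mj: "m \<le> f j" using mle[OF u0(1)] u0(2) by simp
    have key: "\<And>x. x \<in> C \<Longrightarrow> f x = m \<Longrightarrow>
        (\<forall>v\<in>V. wE x v > 0 \<longrightarrow> f v = m) \<and> (\<Sum>v\<in>V. wE x v * (f x - f v)) = 0"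
    proof -
      fix x assume x: "x \<in> C" "f x = m"
      have xV: "x \<in> V" "x \<noteq> i" using x iC unfolding C_def by auto
      have terms: "\<forall>v\<in>V. wE x v * (f v - f x) \<ge> 0"
      proof
        fix v assume v: "v \<in> V"
        show "wE x v * (f v - f x) \<ge> 0"
        proof (cases "wE x v > 0")
          case True
          have "f v \<ge> m"
          proof (cases "v = j")
            case True then show ?thesis using mj by simp
          next
            case False then show ?thesis using Cnb[OF x(1) v \<open>wE x v > 0\<close>] mle by blast
          qed
          then show ?thesis using True x by simp
        next
          case False
          then have "wE x v = 0" using wE0 by (meson not_le order_antisym)
          then show ?thesis by simp
        qed
      qed
      have "(\<Sum>v\<in>V. wE x v * (f x - f v)) = lam * (wV x * f x)" using ELx xV by blast
      moreover have "lam * (wV x * f x) \<ge> 0"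
      proof -
        have "f x > 0" using fpos xV by blast
        moreover have "wV x \<ge> 0" using wV0 by blast
        ultimately show ?thesis using lampos by simp
      qed
      moreover have neg: "(\<Sum>v\<in>V. wE x v * (f x - f v)) = - (\<Sum>v\<in>V. wE x v * (f v - f x))"
        by (simp add: sum_negf[symmetric] algebra_simps)
      moreover have "(\<Sum>v\<in>V. wE x v * (f v - f x)) \<ge> 0" using terms by (intro sum_nonneg) auto
      ultimately have S0: "(\<Sum>v\<in>V. wE x v * (f v - f x)) = 0" by linarith
      then have z: "\<forall>v\<in>V. wE x v * (f v - f x) = 0"
        using terms sum_nonneg_eq_0_iff[OF fin, of "\<lambda>v. wE x v * (f v - f x)"] by simp
      have "\<forall>v\<in>V. wE x v > 0 \<longrightarrow> f v = m"
      proof (intro ballI impI)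
        fix v assume "v \<in> V" "wE x v > 0"
        moreover have "wE x v * (f v - f x) = 0" using z \<open>v \<in> V\<close> by blast
        ultimately show "f v = m" using x by simp
      qed
      moreover have "(\<Sum>v\<in>V. wE x v * (f x - f v)) = 0"
        using S0 neg by simp
      ultimately show "(\<forall>v\<in>V. wE x v > 0 \<longrightarrow> f v = m) \<and> (\<Sum>v\<in>V. wE x v * (f x - f v)) = 0" by blast
    qed
    have "(x0, k) \<in> R" using x0 unfolding C_def by auto
    then have "f x0 = m \<longrightarrow> f k = m"
      unfolding R_def
    proof (induction rule: converse_rtrancl_induct)
      case base
      then show ?case by simp
    next
      case (step y z)
      have "(z, k) \<in> R" using step.hyps(2) unfolding R_def .
      then have "(y, k) \<in> R" using step.hyps(1) unfolding R_def by (meson converse_rtrancl_into_rtrancl)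
      then have yC: "y \<in> C" using step.hyps(1) unfolding C_def pos_edges_def by auto
      have zV: "z \<in> V" "wE y z > 0" using step.hyps(1) unfolding pos_edges_def by auto
      show ?case using key[OF yC] zV step.IH by blast
    qed
    then have "f k = m" using x0 by simp
    then have "(\<Sum>v\<in>V. wE k v * (f k - f v)) = 0" using key[OF kC] by blast
    moreover have "(\<Sum>v\<in>V. wE k v * (f k - f v)) = lam * (wV k * f k)"
    proof -
      have "k \<noteq> i" using iC kC by blast
      then show ?thesis using ELx[OF kV] by blast
    qed
    moreover have "lam * (wV k * f k) > 0"
    proof -
      have "f k > 0" using fpos kV sep iC kC by blast
      then show ?thesis using lampos wk by simp
    qed
    ultimately show False by linarith
  qed
  define Nk where "Nk = nbhd wE V k"
  have jN: "j \<in> Nk" unfolding Nk_def nbhd_def using jV jk sym[rule_format, of j k] by auto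
  have finN: "finite Nk" unfolding Nk_def nbhd_def using fin by auto
  have gt: "\<And>z. z \<in> Nk \<Longrightarrow> z \<noteq> j \<Longrightarrow> f j < f z"
    using Cnb[OF kC] bigger unfolding Nk_def nbhd_def by auto
  have Mj: "Min (f ` Nk) = f j"
  proof (rule Min_eqI)
    show "finite (f ` Nk)" using finN by simp
    show "f j \<in> f ` Nk" using jN by simp
    fix y assume "y \<in> f ` Nk"
    then obtain z where "z \<in> Nk" "y = f z" by auto
    then show "f j \<le> y" using gt[of z] by (cases "z = j") auto
  qed
  show ?thesis unfolding Nk_def[symmetric] Mj
  proof
    show "{z \<in> Nk. f z = f j} \<subseteq> {j}" using gt by fastforce
    show "{j} \<subseteq> {z \<in> Nk. f z = f j}" using jN by simp
  qed
qed

end
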